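(* Suppose $n$ is even, $n_t=n_c=n/2$, and the assignment $W$ is generated by pair-switching rerandomization (PSRR) with threshold $a>0$ and tuning parameter $\gamma\ge0$ (assumed to terminate almost surely). Then the difference-in-means estimator $\widehat\tau=n_t^{-1}\sum_{i:W_i=1}Y_i(1)-n_c^{-1}\sum_{i:W_i=0}Y_i(0)$ satisfies $E(\widehat\tau)=\tau$, where $\tau=n^{-1}\sum_{i=1}^n\{Y_i(1)-Y_i(0)\}$.
   Context: Units $i=1,\dots,n$ have fixed potential outcomes $Y_i(1),Y_i(0)$ and fixed covariates $X_i\in\mathbb R^p$, with sample covariance $S_{XX}=(n-1)^{-1}\sum_i(X_i-\overline X)(X_i-\overline X)^{\mathrm T}$ invertible. Expectation is over the randomness of the design only. For an assignment $W\in\{0,1\}^n$ with $n_t$ ones, $M(W)=n_t(1-n_t/n)(\overline X_t-\overline X_c)^{\mathrm T}S_{XX}^{-1}(\overline X_t-\overline X_c)$ with $\overline X_t=n_t^{-1}\sum_{i:W_i=1}X_i$, $\overline X_c=n_c^{-1}\sum_{i:W_i=0}X_i$. PSRR: draw $W^{(0)}$ uniformly among assignments with $n_t$ ones; set $t=0$, $M^{(0)}=M(W^{(0)})$. While $M^{(t)}>a$: choose uniformly at random one index $i$ with $W^{(t)}_i=1$ and one index $j$ with $W^{(t)}_j=0$, let $W^*$ be $W^{(t)}$ with entries $i,j$ swapped, $M^*=M(W^* )$; with probability $\min\{(M^{(t)}/M^* )^\gamma,1\}$ set $W^{(t+1)}=W^*$, $M^{(t+1)}=M^*$, $t\leftarrow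 t+1$ (otherwise keep the current state and try again). Output $W=W^{(t)}$ once $M^{(t)}\le a$. *)

theory Defs
  imports "HOL-Analysis.Analysis" "HOL-Probability.SPMF"
begin

text \<open>Units are indexed by 0..<n; an assignment W is represented by its set of
treated units (W_i = 1 iff i in W). Covariates X i :: real^'p.\<close>

definition mean_cov :: "(nat \<Rightarrow> real^'p) \<Rightarrow> nat set \<Rightarrow> real^'p" where
  "mean_cov X A = (1 / real (card A)) *\<^sub>R (\<Sum>i\<in>A. X i)"

definition outer_prod :: "real^'p \<Rightarrow> real^'p \<Rightarrow> real^'p^'p" where
  "outer_prod u v = (\<chi> r c. u $ r * v $ c)"

definition Sxx :: "nat \<Rightarrow> (nat \<Rightarrow> real^'p) \<Rightarrow> real^'p^'p" where
  "Sxx n X = (1 / (real n - 1)) *\<^sub>R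
     (\<Sum>i<n. outer_prod (X i - mean_cov X {..<n}) (X i - mean_cov X {..<n}))"

definition mahal :: "nat \<Rightarrow> (nat \<Rightarrow> real^'p) \<Rightarrow> nat set \<Rightarrow> real" where
  "mahal n X W =
     (let nt = real (card W);
          d = mean_cov X W - mean_cov X ({..<n} - W)
      in nt * (1 - nt / real n) * (d \<bullet> (matrix_inv (Sxx n X) *v d)))"

text \<open>Acceptance probability min{(M/M*)^gamma, 1}; when M* <= M the ratio is
at least 1 (or +infinity if M* = 0), so the probability is 1.\<close>
definition acc_prob :: "real \<Rightarrow> real \<Rightarrow> real \<Rightarrow> real" where
  "acc_prob \<gamma> M Mstar = (if Mstar \<le> M then 1 else min ((M / Mstar) powr \<gamma>) 1)"

text \<open>The PSRR loop, started from the current assignment W, as a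
(sub)probability distribution over outputs. Losslessness = a.s. termination.\<close>
partial_function (spmf) psrr_loop ::
  "nat \<Rightarrow> (nat \<Rightarrow> real^'p) \<Rightarrow> real \<Rightarrow> real \<Rightarrow> nat set \<Rightarrow> nat set spmf" where
  "psrr_loop n X a \<gamma> W =
     (if mahal n X W \<le> a then return_spmf W
      else do {
        i \<leftarrow> spmf_of_set W;
        j \<leftarrow> spmf_of_set ({..<n} - W);
        let W' = insert j (W - {i});
        acc \<leftarrow> spmf_of_pmf (bernoulli_pmf (acc_prob \<gamma> (mahal n X W) (mahal n X W')));
        if acc then psrr_loop n X a \<gamma> W' else psrr_loop n X a \<gamma> W
      })"

definition assignments :: "nat \<Rightarrow> nat \<Rightarrow> nat set set" where
  "assignments n nt = {W. W \<subseteq> {..<n} \<and> card W = nt}"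

definition psrr :: "nat \<Rightarrow> nat \<Rightarrow> (nat \<Rightarrow> real^'p) \<Rightarrow> real \<Rightarrow> real \<Rightarrow> nat set spmf" where
  "psrr n nt X a \<gamma> = spmf_of_set (assignments n nt) \<bind> psrr_loop n X a \<gamma>"

definition tau_hat :: "nat \<Rightarrow> (nat \<Rightarrow> real) \<Rightarrow> (nat \<Rightarrow> real) \<Rightarrow> nat set \<Rightarrow> real" where
  "tau_hat n Y1 Y0 W =
     (\<Sum>i\<in>W. Y1 i) / real (card W) - (\<Sum>i\<in>{..<n} - W. Y0 i) / real (n - card W)"

definition tau :: "nat \<Rightarrow> (nat \<Rightarrow> real) \<Rightarrow> (nat \<Rightarrow> real) \<Rightarrow> real" where
  "tau n Y1 Y0 = (\<Sum>i<n. Y1 i - Y0 i) / real n"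

end

theory Submission
  imports Defs
begin

lemma mahal_compl:
  assumes "W \<subseteq> {..<n}" "2 * card W = n"
  shows "mahal n X ({..<n} - W) = mahal n X W"
proof -
  have cc: "{..<n} - ({..<n} - W) = W" using assms(1) by auto
  have card: "card ({..<n} - W) = card W"
    using assms by (simp add: card_Diff_subset finite_subset)
  have neg: "\<And>v::real^'a. \<And>M. (- v) \<bullet> (M *v (- v)) = v \<bullet> (M *v v)"
    proof - fix v :: "real^'a" and M :: "real^'a^'a" have "M *v (- v) = - (M *v v)" by (rule vec.neg) then show "(- v) \<bullet> (M *v (- v)) = v \<bullet> (M *v v)" by simp qed
  show ?thesis
    unfolding mahal_def Let_def cc card
    using neg[of "mean_cov X W - mean_cov X ({..<n} - W)"] by (simp add: minus_diff_eq)
qed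

lemma loop_eq:
  fixes X :: "nat \<Rightarrow> real^'p"
  assumes "2 * nt = n"
  shows "\<forall>W\<in>assignments n nt.
     psrr_loop n X a \<gamma> ({..<n} - W) = map_spmf (\<lambda>U. {..<n} - U) (psrr_loop n X a \<gamma> W) \<and>
     map_spmf (\<lambda>U. U \<in> assignments n nt) (psrr_loop n X a \<gamma> W) = map_spmf (\<lambda>_. True) (psrr_loop n X a \<gamma> W)"
proof (induction rule: psrr_loop.fixp_induct)
  case 1
  show ?case
    apply (simp only: Ball_def curry_def)
    apply (intro admissible_all admissible_imp admissible_const admissible_conj admissible_eq_mcontI[where lub=lub_spmf and ord="ord_spmf (=)"] mcont_map_spmf)
    apply (simp_all add: mcont_call)
    done
next
  case 2
  show ?case by simp
next
  case (3 g)
  let ?A = "assignments n nt"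
  let ?c = "\<lambda>U. {..<n} - U"
  have IH1: "g n X a \<gamma> (?c U) = map_spmf ?c (g n X a \<gamma> U)" if "U \<in> ?A" for U
    using 3 that by blast
  have IH2: "map_spmf (\<lambda>U. U \<in> ?A) (g n X a \<gamma> U) = map_spmf (\<lambda>_. True) (g n X a \<gamma> U)" if "U \<in> ?A" for U
    using 3 that by blast
  show ?case
  proof (intro ballI conjI)
    fix W assume WA: "W \<in> ?A"
    hence Wsub: "W \<subseteq> {..<n}" and Wc: "card W = nt" by (auto simp: assignments_def)
    have finW: "finite W" using Wsub finite_subset by blast
    have cc: "?c (?c W) = W" using Wsub by auto
    have mW: "mahal n X (?c W) = mahal n X W" using mahal_compl[OF Wsub] Wc assms by simp
    have swapA: "insert j (W - {i}) \<in> ?A" if "i \<in> W" "j \<in> ?c W" for i j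
    proof -
      have "card (insert j (W - {i})) = card W" using that finW card_gt_0_iff[of W] by (auto simp: card_Diff_singleton)
      thus ?thesis using that Wsub Wc by (auto simp: assignments_def)
    qed
    have swapc: "insert i (?c W - {j}) = ?c (insert j (W - {i}))" if "i \<in> W" "j \<in> ?c W" for i j
      using that Wsub by auto
    show "(if mahal n X (?c W) \<le> a then return_spmf (?c W)
            else spmf_of_set (?c W) \<bind>
                 (\<lambda>i. spmf_of_set ({..<n} - ?c W) \<bind>
                      (\<lambda>j. let W' = insert j (?c W - {i})
                           in spmf_of_pmf (bernoulli_pmf (acc_prob \<gamma> (mahal n X (?c W)) (mahal n X W'))) \<bind>
                              (\<lambda>acc. if acc then g n X a \<gamma> W' else g n X a \<gamma> (?c W))))) =
          map_spmf ?c
           (if mahal n X W \<le> a then return_spmf W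
            else spmf_of_set W \<bind>
                 (\<lambda>i. spmf_of_set ({..<n} - W) \<bind>
                      (\<lambda>j. let W' = insert j (W - {i})
                           in spmf_of_pmf (bernoulli_pmf (acc_prob \<gamma> (mahal n X W) (mahal n X W'))) \<bind>
                              (\<lambda>acc. if acc then g n X a \<gamma> W' else g n X a \<gamma> W))))"
    proof (cases "mahal n X W \<le> a")
      case True
      then show ?thesis using mW by simp
    next
      case False
      have "spmf_of_set (?c W) \<bind>
                 (\<lambda>i. spmf_of_set ({..<n} - ?c W) \<bind>
                      (\<lambda>j. let W' = insert j (?c W - {i})
                           in spmf_of_pmf (bernoulli_pmf (acc_prob \<gamma> (mahal n X (?c W)) (mahal n X W'))) \<bind>
                              (\<lambda>acc. if acc then g n X a \<gamma> W' else g n X a \<gamma> (?c W))))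
          = spmf_of_set W \<bind> (\<lambda>j. spmf_of_set (?c W) \<bind> (\<lambda>i.
                      (let W' = insert j (?c W - {i})
                           in spmf_of_pmf (bernoulli_pmf (acc_prob \<gamma> (mahal n X (?c W)) (mahal n X W'))) \<bind>
                              (\<lambda>acc. if acc then g n X a \<gamma> W' else g n X a \<gamma> (?c W)))))"
        unfolding cc by (rule bind_commute_spmf)
      also have "\<dots> = spmf_of_set W \<bind>
                 (\<lambda>i. spmf_of_set ({..<n} - W) \<bind>
                      (\<lambda>j. map_spmf ?c (let W' = insert j (W - {i})
                           in spmf_of_pmf (bernoulli_pmf (acc_prob \<gamma> (mahal n X W) (mahal n X W'))) \<bind>
                              (\<lambda>acc. if acc then g n X a \<gamma> W' else g n X a \<gamma> W))))"
      proof (intro bind_spmf_cong refl)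
        fix i j assume i: "i \<in> set_spmf (spmf_of_set W)" and j: "j \<in> set_spmf (spmf_of_set (?c W))"
        have i': "i \<in> W" using i finW by simp
        have j': "j \<in> ?c W" using j by simp
        have A': "insert j (W - {i}) \<in> ?A" by (rule swapA[OF i' j'])
        have mW': "mahal n X (?c (insert j (W - {i}))) = mahal n X (insert j (W - {i}))"
          using A' mahal_compl[of "insert j (W - {i})" n X] assms by (auto simp: assignments_def)
        show "(let W' = insert i (?c W - {j})
                in spmf_of_pmf (bernoulli_pmf (acc_prob \<gamma> (mahal n X (?c W)) (mahal n X W'))) \<bind>
                   (\<lambda>acc. if acc then g n X a \<gamma> W' else g n X a \<gamma> (?c W))) =
              map_spmf ?c (let W' = insert j (W - {i})
                in spmf_of_pmf (bernoulli_pmf (acc_prob \<gamma> (mahal n X W) (mahal n X W'))) \<bind>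
                   (\<lambda>acc. if acc then g n X a \<gamma> W' else g n X a \<gamma> W))"
          unfolding Let_def swapc[OF i' j'] mW mW' map_spmf_bind_spmf o_def
          by (intro bind_spmf_cong refl) (simp add: IH1[OF A'] IH1[OF WA])
      qed
      finally show ?thesis using False mW by (simp add: map_spmf_bind_spmf o_def)
    qed
  next
    fix W assume WA: "W \<in> ?A"
    hence Wsub: "W \<subseteq> {..<n}" and Wc: "card W = nt" by (auto simp: assignments_def)
    have finW: "finite W" using Wsub finite_subset by blast
    have swapA: "insert j (W - {i}) \<in> ?A" if "i \<in> W" "j \<in> ?c W" for i j
    proof -
      have "card (insert j (W - {i})) = card W" using that finW card_gt_0_iff[of W] by (auto simp: card_Diff_singleton)
      thus ?thesis using that Wsub Wc by (auto simp: assignments_def)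
    qed
    show "map_spmf (\<lambda>U. U \<in> ?A)
           (if mahal n X W \<le> a then return_spmf W
            else spmf_of_set W \<bind>
                 (\<lambda>i. spmf_of_set ({..<n} - W) \<bind>
                      (\<lambda>j. let W' = insert j (W - {i})
                           in spmf_of_pmf (bernoulli_pmf (acc_prob \<gamma> (mahal n X W) (mahal n X W'))) \<bind>
                              (\<lambda>acc. if acc then g n X a \<gamma> W' else g n X a \<gamma> W)))) =
          map_spmf (\<lambda>_. True)
           (if mahal n X W \<le> a then return_spmf W
            else spmf_of_set W \<bind>
                 (\<lambda>i. spmf_of_set ({..<n} - W) \<bind>
                      (\<lambda>j. let W' = insert j (W - {i})
                           in spmf_of_pmf (bernoulli_pmf (acc_prob \<gamma> (mahal n X W) (mahal n X W'))) \<bind>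
                              (\<lambda>acc. if acc then g n X a \<gamma> W' else g n X a \<gamma> W))))"
    proof (cases "mahal n X W \<le> a")
      case True
      then show ?thesis using WA by simp
    next
      case False
      show ?thesis
        unfolding if_not_P[OF False] map_spmf_bind_spmf o_def Let_def
      proof (intro bind_spmf_cong refl)
        fix i j acc assume i: "i \<in> set_spmf (spmf_of_set W)" and j: "j \<in> set_spmf (spmf_of_set ({..<n} - W))"
        have A': "insert j (W - {i}) \<in> ?A" using i j finW by (intro swapA) auto
        show "map_spmf (\<lambda>U. U \<in> ?A) (if acc then g n X a \<gamma> (insert j (W - {i})) else g n X a \<gamma> W) =
              map_spmf (\<lambda>_. True) (if acc then g n X a \<gamma> (insert j (W - {i})) else g n X a \<gamma> W)"
          using IH2[OF A'] IH2[OF WA] by simp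
      qed
    qed
  qed
qed


theorem theorem2:
  fixes n nt :: nat and X :: "nat \<Rightarrow> real^'p" and Y1 Y0 :: "nat \<Rightarrow> real"
    and a \<gamma> :: real
  assumes "even n" and "0 < n" and "nt = n div 2"
    and "invertible (Sxx n X)"
    and "a > 0" and "\<gamma> \<ge> 0"
    and "lossless_spmf (psrr n nt X a \<gamma>)"
  shows "(\<integral>W. tau_hat n Y1 Y0 W \<partial>measure_spmf (psrr n nt X a \<gamma>)) = tau n Y1 Y0"
proof -
  let ?A = "assignments n nt"
  let ?c = "\<lambda>U. {..<n} - U"
  let ?p = "psrr n nt X a \<gamma>"
  let ?f = "tau_hat n Y1 Y0"
  have n2: "2 * nt = n" using assms(1,3) by simp
  have finA: "finite ?A"
    by (rule finite_subset[of _ "Pow {..<n}"]) (auto simp: assignments_def)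
  have cA: "?c U \<in> ?A" if "U \<in> ?A" for U
    using that n2 by (auto simp: assignments_def card_Diff_subset finite_subset)
  have cc: "?c (?c U) = U" if "U \<in> ?A" for U using that by (auto simp: assignments_def)
  have inj: "inj_on ?c ?A" by (metis (no_types, lifting) cc inj_onI)
  have imgA: "?c ` ?A = ?A"
  proof
    show "?c ` ?A \<subseteq> ?A" using cA by blast
    show "?A \<subseteq> ?c ` ?A" using cA cc by (metis image_eqI subsetI)
  qed
  have LE: "\<And>W. W \<in> ?A \<Longrightarrow> psrr_loop n X a \<gamma> (?c W) = map_spmf ?c (psrr_loop n X a \<gamma> W)"
    and LS: "\<And>W. W \<in> ?A \<Longrightarrow> map_spmf (\<lambda>U. U \<in> ?A) (psrr_loop n X a \<gamma> W) = map_spmf (\<lambda>_. True) (psrr_loop n X a \<gamma> W)"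
    using loop_eq[OF n2, of X a \<gamma>] by blast+
  have mapp: "map_spmf ?c ?p = ?p"
  proof -
    have "map_spmf ?c ?p = spmf_of_set ?A \<bind> (\<lambda>W. map_spmf ?c (psrr_loop n X a \<gamma> W))"
      by (simp add: psrr_def map_spmf_bind_spmf o_def)
    also have "\<dots> = spmf_of_set ?A \<bind> (\<lambda>W. psrr_loop n X a \<gamma> (?c W))"
      by (intro bind_spmf_cong refl) (simp add: LE finA)
    also have "\<dots> = map_spmf ?c (spmf_of_set ?A) \<bind> psrr_loop n X a \<gamma>"
      by (simp add: bind_map_spmf o_def)
    also have "\<dots> = ?p" using inj imgA by (simp add: psrr_def)
    finally show ?thesis .
  qed
  have supp: "set_spmf ?p \<subseteq> ?A"
  proof
    fix x assume "x \<in> set_spmf ?p"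
    then obtain W where W: "W \<in> ?A" and x: "x \<in> set_spmf (psrr_loop n X a \<gamma> W)"
      using finA by (auto simp: psrr_def set_bind_spmf)
    have "(x \<in> ?A) \<in> set_spmf (map_spmf (\<lambda>U. U \<in> ?A) (psrr_loop n X a \<gamma> W))" using x by simp
    also have "\<dots> \<subseteq> {True}" unfolding LS[OF W] by auto
    finally show "x \<in> ?A" by simp
  qed
  have meas: "\<And>h::nat set \<Rightarrow> real. h \<in> borel_measurable (measure_spmf ?p)" by simp
  have intg: "integrable (measure_spmf ?p) h" for h :: "nat set \<Rightarrow> real"
  proof (rule measure_spmf.integrable_const_bound[where B="\<Sum>W\<in>?A. \<bar>h W\<bar>"])
    show "AE x in measure_spmf ?p. norm (h x) \<le> (\<Sum>W\<in>?A. \<bar>h W\<bar>)"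
      using supp finA by (auto intro!: member_le_sum)
  qed (rule meas)
  have swap: "(\<integral>W. ?f W \<partial>measure_spmf ?p) = (\<integral>W. ?f (?c W) \<partial>measure_spmf ?p)"
  proof -
    have "(\<integral>W. ?f W \<partial>measure_spmf ?p) = (\<integral>W. ?f W \<partial>measure_spmf (map_spmf ?c ?p))"
      using mapp by simp
    also have "\<dots> = (\<integral>W. ?f (?c W) \<partial>measure_spmf ?p)"
      unfolding measure_map_spmf_conv_distr by (rule integral_distr) simp_all
    finally show ?thesis .
  qed
  have pair: "?f W + ?f (?c W) = 2 * tau n Y1 Y0" if "W \<in> ?A" for W
  proof -
    have Wsub: "W \<subseteq> {..<n}" and Wc: "card W = nt" using that by (auto simp: assignments_def)
    have cW: "card (?c W) = nt" using cA[OF that] by (simp add: assignments_def)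
    have s1: "sum h {..<n} = sum h ({..<n} - W) + sum h W" for h :: "nat \<Rightarrow> real"
      using Wsub by (simp add: sum.subset_diff)
    have "n - nt = nt" using n2 by simp
    have "real n - real nt = real nt" using n2 by (metis of_nat_diff \<open>n - nt = nt\<close> diff_le_self)
    have rn: "real n = 2 * real nt" using n2 by simp
    have ntpos: "real nt \<noteq> 0" using assms(2) n2 by auto
    have "?f W + ?f (?c W) = ((\<Sum>i\<in>W. Y1 i) + (\<Sum>i\<in>?c W. Y1 i) - (\<Sum>i\<in>?c W. Y0 i) - (\<Sum>i\<in>W. Y0 i)) / real nt"
      unfolding tau_hat_def using Wc cW cc[OF that] n2 \<open>real n - real nt = real nt\<close> \<open>n - nt = nt\<close> by (simp add: diff_divide_distrib add_divide_distrib)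
    also have "\<dots> = 2 * tau n Y1 Y0"
      unfolding tau_def sum_subtractf s1 using ntpos by (simp add: rn field_simps)
    finally show ?thesis .
  qed
  have "2 * (\<integral>W. ?f W \<partial>measure_spmf ?p) = (\<integral>W. ?f W \<partial>measure_spmf ?p) + (\<integral>W. ?f (?c W) \<partial>measure_spmf ?p)"
    using swap by simp
  also have "\<dots> = (\<integral>W. ?f W + ?f (?c W) \<partial>measure_spmf ?p)"
    by (rule Bochner_Integration.integral_add[symmetric]) (rule intg)+
  also have "\<dots> = (\<integral>W. 2 * tau n Y1 Y0 \<partial>measure_spmf ?p)"
    by (rule integral_cong_AE) (use supp pair in auto)
  also have "\<dots> = 2 * tau n Y1 Y0"
    using assms(7) by (simp add: lossless_spmf_def weight_spmf_def)
  finally show ?thesis by simp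
qed

end
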